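(* Let $(C,\mathfrak p,\mathfrak d)$ be a regular $q$-magma coalgebra. For all $1\le i\le n-1$ we have $\mathfrak p_{i1}^i=i\,\mathfrak p_{11}^1(\mathfrak p_{10}^1)^{i-1}$ and $\mathfrak d_{i1}^i=i\,\mathfrak d_{11}^1(\mathfrak d_{10}^1)^{i-1}$.
   Context: $K$ is an algebraically closed field of characteristic $0$ and $n\ge2$. $C$ is the coalgebra dual to $K[y]/\langle y^n\rangle$: basis $x_0,\dots,x_{n-1}$, $\Delta(x_i)=\sum_{j+k=i}x_j\otimes x_k$, $\epsilon(x_i)=\delta_{i0}$; $C\otimes C$ has the tensor product coalgebra structure; Sweedler notation $\Delta(b)=b_{(1)}\otimes b_{(2)}$. For linear maps $\mathfrak p,\mathfrak d\colon C\otimes C\to C$ write $a\cdot b=\mathfrak p(a\otimes b)$, $a:b=\mathfrak d(a\otimes b)$, $\mathfrak p(x_i\otimes x_j)=\sum_{k=0}^{n-1}\mathfrak p_{ij}^kx_k$, $\mathfrak d(x_i\otimes x_j)=\sum_{k=0}^{n-1}\mathfrak d_{ij}^kx_k$. A triple $(C,\mathfrak p,\mathfrak d)$ with $\mathfrak p,\mathfrak d$ coalgebra morphisms is a regular $q$-magma coalgebra if there are coalgebra morphisms $a\otimes b\mapsto a^b$, $a\otimes b\mapsto a_b$ from $C\otimes C$ to $C$ with $a^{b_{(1)}}\cdot b_{(2)}=(a\cdot b_{(1)})^{b_{(2)}}=\epsilon(b)a$ and $(a:b_{(2)})_{b_{(1)}}=a_{b_{(2)}}:b_{(1)}=\epsilon(b)a$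 for all $a,b\in C$. *)

theory Defs
  imports "HOL-Computational_Algebra.Polynomial"
begin

text \<open>C has basis x_0..x_{n-1}. A linear map f : C \<otimes> C \<rightarrow> C is given by its
  structure constants: f(x_i \<otimes> x_j) = \<Sum>_{k<n} f i j k x_k (only indices < n matter).\<close>

text \<open>f is a coalgebra morphism C \<otimes> C \<rightarrow> C (tensor product coalgebra on C \<otimes> C):
  counit: eps(f(x_i \<otimes> x_j)) = eps(x_i) eps(x_j);
  comultiplication: Delta(f(x_i \<otimes> x_j)) = (f \<otimes> f)(Delta(x_i \<otimes> x_j)),
  compared coefficientwise at x_s \<otimes> x_t.\<close>
definition coalg_morph :: "nat \<Rightarrow> (nat \<Rightarrow> nat \<Rightarrow> nat \<Rightarrow> 'a::comm_ring_1) \<Rightarrow> bool" where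
  "coalg_morph n f \<longleftrightarrow>
     (\<forall>i<n. \<forall>j<n. f i j 0 = (if i = 0 \<and> j = 0 then 1 else 0)) \<and>
     (\<forall>i<n. \<forall>j<n. \<forall>s<n. \<forall>t<n.
        (if s + t < n then f i j (s + t) else 0) =
        (\<Sum>a\<le>i. \<Sum>c\<le>j. f a c s * f (i - a) (j - c) t))"

text \<open>Regular q-magma coalgebra (C, p, d): p, d coalgebra morphisms and there exist
  coalgebra morphisms U (a \<otimes> b \<mapsto> a^b) and L (a \<otimes> b \<mapsto> a_b) with
  a^{b(1)}.b(2) = (a.b(1))^{b(2)} = eps(b) a and (a:b(2))_{b(1)} = a_{b(2)}:b(1) = eps(b) a,
  checked on basis elements a = x_i, b = x_j, coefficient at x_m
  (Delta x_j = \<Sum>_{u+v=j} x_u \<otimes> x_v).\<close>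
definition regular_q_magma_coalg ::
  "nat \<Rightarrow> (nat \<Rightarrow> nat \<Rightarrow> nat \<Rightarrow> 'a::comm_ring_1) \<Rightarrow> (nat \<Rightarrow> nat \<Rightarrow> nat \<Rightarrow> 'a) \<Rightarrow> bool" where
  "regular_q_magma_coalg n P D \<longleftrightarrow>
     coalg_morph n P \<and> coalg_morph n D \<and>
     (\<exists>U L. coalg_morph n U \<and> coalg_morph n L \<and>
       (\<forall>i<n. \<forall>j<n. \<forall>m<n.
          (\<Sum>u\<le>j. \<Sum>k<n. U i u k * P k (j - u) m) = (if j = 0 \<and> m = i then 1 else 0) \<and>
          (\<Sum>u\<le>j. \<Sum>k<n. P i u k * U k (j - u) m) = (if j = 0 \<and> m = i then 1 else 0) \<and>
          (\<Sum>u\<le>j. \<Sum>k<n. D i (j - u) k * L k u m) = (if j = 0 \<and> m = i then 1 else 0) \<and>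
          (\<Sum>u\<le>j. \<Sum>k<n. L i (j - u) k * D k u m) = (if j = 0 \<and> m = i then 1 else 0)))"

end

theory Submission
  imports Defs
begin

lemma cm0:
  assumes "coalg_morph n f" "i < n" "j < n"
  shows "f i j 0 = (if i = 0 \<and> j = 0 then 1 else 0)"
  using assms unfolding coalg_morph_def by blast

lemma cmS:
  assumes "coalg_morph n f" "i < n" "j < n" "s < n" "t < n"
  shows "(if s + t < n then f i j (s + t) else 0) =
        (\<Sum>a\<le>i. \<Sum>c\<le>j. f a c s * f (i - a) (j - c) t)"
  using assms unfolding coalg_morph_def by blast

lemma sum_le1: "(\<Sum>c\<le>(1::nat). g c) = g 0 + (g 1 :: 'b::comm_monoid_add)"
  by (simp add: atMost_Suc add.commute)

lemma f001:
  fixes f :: "nat \<Rightarrow> nat \<Rightarrow> nat \<Rightarrow> 'a::field"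
  assumes cm: "coalg_morph n f" and n: "n \<ge> 2"
  shows "f 0 0 1 = 0"
proof -
  have pw: "k < n \<Longrightarrow> f 0 0 k = f 0 0 1 ^ k" for k
  proof (induction k)
    case 0 then show ?case using cm0[OF cm] by simp
  next
    case (Suc k)
    have "f 0 0 (1 + k) = f 0 0 1 * f 0 0 k"
      using cmS[OF cm, of 0 0 1 k] Suc.prems n by simp
    then show ?case using Suc by simp
  qed
  have "f 0 0 1 * f 0 0 (n - 1) = 0"
    using cmS[OF cm, of 0 0 1 "n - 1"] n by simp
  then have "f 0 0 1 ^ n = 0" using pw[of "n - 1"] n
    by (metis Suc_diff_1 diff_less less_le_trans pos2 power_Suc zero_less_one)
  then show ?thesis by simp
qed

lemma deg:
  fixes f :: "nat \<Rightarrow> nat \<Rightarrow> nat \<Rightarrow> 'a::field"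
  assumes cm: "coalg_morph n f" and n: "n \<ge> 2"
  shows "k < n \<Longrightarrow> a < n \<Longrightarrow> c < n \<Longrightarrow> a + c < k \<Longrightarrow> f a c k = 0"
proof (induction k arbitrary: a c)
  case 0 then show ?case by simp
next
  case (Suc k)
  show ?case
  proof (cases "k = 0")
    case True
    then show ?thesis using Suc.prems f001[OF cm n] by simp
  next
    case False
    have "f a c (1 + k) = (\<Sum>a'\<le>a. \<Sum>c'\<le>c. f a' c' 1 * f (a - a') (c - c') k)"
      using cmS[OF cm, of a c 1 k] Suc.prems n by simp
    also have "\<dots> = 0"
    proof (intro sum.neutral ballI)
      fix a' c' assume a': "a' \<in> {..a}" and c': "c' \<in> {..c}"
      show "f a' c' 1 * f (a - a') (c - c') k = 0"
      proof (cases "a' = 0 \<and> c' = 0")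
        case True then show ?thesis using f001[OF cm n] by simp
      next
        case False
        then have "f (a - a') (c - c') k = 0"
          using Suc.IH[of "a - a'" "c - c'"] Suc.prems a' c' by auto
        then show ?thesis by simp
      qed
    qed
    finally show ?thesis by simp
  qed
qed


lemma diag:
  fixes f :: "nat \<Rightarrow> nat \<Rightarrow> nat \<Rightarrow> 'a::field"
  assumes cm: "coalg_morph n f" and n: "n \<ge> 2"
  shows "m < n \<Longrightarrow> f m 0 m = f 1 0 1 ^ m"
proof (induction m)
  case 0 then show ?case using cm0[OF cm] by simp
next
  case (Suc m)
  have "f (Suc m) 0 (1 + m) = (\<Sum>a'\<le>Suc m. f a' 0 1 * f (Suc m - a') 0 m)"
    using cmS[OF cm, of "Suc m" 0 1 m] Suc.prems n by simp
  also have "\<dots> = (\<Sum>a'\<le>Suc m. if a' = 1 then f 1 0 1 * f m 0 m else 0)"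
  proof (rule sum.cong)
    fix a' assume a': "a' \<in> {..Suc m}"
    show "f a' 0 1 * f (Suc m - a') 0 m = (if a' = 1 then f 1 0 1 * f m 0 m else 0)"
    proof -
      consider "a' = 0" | "a' = 1" | "a' \<ge> 2" by linarith
      then show ?thesis
      proof cases
        case 1 then show ?thesis using f001[OF cm n] by simp
      next
        case 2 then show ?thesis by simp
      next
        case 3 then show ?thesis using deg[OF cm n, of m "Suc m - a'" 0] Suc.prems a' by simp
      qed
    qed
  qed simp
  finally show ?case using Suc cm0[OF cm, of 0 0] n by (cases m) auto
qed

lemma Tm:
  fixes f :: "nat \<Rightarrow> nat \<Rightarrow> nat \<Rightarrow> 'a::field"
  assumes cm: "coalg_morph n f" and n: "n \<ge> 2" and m: "m < n"
  shows "(\<Sum>a'\<le>m. \<Sum>c'\<le>1. f a' c' 1 * f (m - a') (1 - c') m)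
     = (if m = 0 then 0 else f 1 0 1 * f (m - 1) 1 m) + f 0 1 1 * f 1 0 1 ^ m"
proof -
  have "(\<Sum>a'\<le>m. \<Sum>c'\<le>1. f a' c' 1 * f (m - a') (1 - c') m)
     = (\<Sum>a'\<le>m. f a' 0 1 * f (m - a') 1 m) + (\<Sum>a'\<le>m. f a' 1 1 * f (m - a') 0 m)"
    by (simp add: sum_le1 sum.distrib)
  also have "(\<Sum>a'\<le>m. f a' 0 1 * f (m - a') 1 m)
      = (\<Sum>a'\<le>m. if a' = 1 then f 1 0 1 * f (m - 1) 1 m else 0)"
  proof (rule sum.cong)
    fix a' assume a': "a' \<in> {..m}"
    consider "a' = 0" | "a' = 1" | "a' \<ge> 2" by linarith
    then show "f a' 0 1 * f (m - a') 1 m = (if a' = 1 then f 1 0 1 * f (m - 1) 1 m else 0)"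
    proof cases
      case 1 then show ?thesis using f001[OF cm n] by simp
    next
      case 2 then show ?thesis by simp
    next
      case 3 then show ?thesis using deg[OF cm n, of m "m - a'" 1] m n a' by simp
    qed
  qed simp
  also have "\<dots> = (if m = 0 then 0 else f 1 0 1 * f (m - 1) 1 m)"
    by simp
  also have "(\<Sum>a'\<le>m. f a' 1 1 * f (m - a') 0 m)
      = (\<Sum>a'\<le>m. if a' = 0 then f 0 1 1 * f 1 0 1 ^ m else 0)"
  proof (rule sum.cong)
    fix a' assume a': "a' \<in> {..m}"
    show "f a' 1 1 * f (m - a') 0 m = (if a' = 0 then f 0 1 1 * f 1 0 1 ^ m else 0)"
    proof (cases "a' = 0")
      case True then show ?thesis using diag[OF cm n m] by simp
    next
      case False then show ?thesis using deg[OF cm n, of m "m - a'" 0] m n a' by simp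
    qed
  qed simp
  also have "\<dots> = f 0 1 1 * f 1 0 1 ^ m" by simp
  finally show ?thesis .
qed

lemma G:
  fixes f :: "nat \<Rightarrow> nat \<Rightarrow> nat \<Rightarrow> 'a::field"
  assumes cm: "coalg_morph n f" and n: "n \<ge> 2"
  shows "Suc m < n \<Longrightarrow> f m 1 (Suc m) = of_nat (Suc m) * f 0 1 1 * f 1 0 1 ^ m"
proof (induction m)
  case 0
  have "f 0 1 (1 + 0) = f 0 1 1 * f 1 0 1 ^ 0"
    using cmS[OF cm, of 0 1 1 0] Tm[OF cm n, of 0] n by simp
  then show ?case by simp
next
  case (Suc m)
  have "f (Suc m) 1 (1 + Suc m) = f 1 0 1 * f m 1 (Suc m) + f 0 1 1 * f 1 0 1 ^ Suc m"
    using cmS[OF cm, of "Suc m" 1 1 "Suc m"] Tm[OF cm n, of "Suc m"] n Suc.prems by simp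
  then show ?case using Suc by (simp add: algebra_simps)
qed

lemma b0:
  fixes f :: "nat \<Rightarrow> nat \<Rightarrow> nat \<Rightarrow> 'a::field_char_0"
  assumes cm: "coalg_morph n f" and n: "n \<ge> 2" and a: "f 1 0 1 \<noteq> 0"
  shows "f 0 1 1 = 0"
proof -
  obtain k where k: "n = Suc (Suc k)" using n by (metis add_2_eq_Suc le_Suc_ex)
  have "0 = f 1 0 1 * f k 1 (Suc k) + f 0 1 1 * f 1 0 1 ^ Suc k"
    using cmS[OF cm, of "Suc k" 1 1 "Suc k"] Tm[OF cm n, of "Suc k"] k by simp
  also have "\<dots> = of_nat n * f 0 1 1 * f 1 0 1 ^ Suc k"
    using G[OF cm n, of k] k by (simp add: algebra_simps)
  finally show ?thesis using a n by simp
qed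

lemma H:
  fixes f :: "nat \<Rightarrow> nat \<Rightarrow> nat \<Rightarrow> 'a::field_char_0"
  assumes cm: "coalg_morph n f" and n: "n \<ge> 2" and a: "f 1 0 1 \<noteq> 0"
  shows "m < n \<Longrightarrow> f m 1 m = of_nat m * f 1 1 1 * f 1 0 1 ^ (m - 1)"
proof (induction m)
  case 0 then show ?case using cm0[OF cm] n by simp
next
  case (Suc m)
  have b: "f 0 1 1 = 0" using b0[OF cm n a] .
  have "f (Suc m) 1 (1 + m) = (\<Sum>a'\<le>Suc m. \<Sum>c'\<le>1. f a' c' 1 * f (Suc m - a') (1 - c') m)"
    using cmS[OF cm, of "Suc m" 1 1 m] Suc.prems n by simp
  also have "\<dots> = (\<Sum>a'\<le>Suc m. f a' 0 1 * f (Suc m - a') 1 m) + (\<Sum>a'\<le>Suc m. f a' 1 1 * f (Suc m - a') 0 m)"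
    by (simp add: sum_le1 sum.distrib)
  also have "(\<Sum>a'\<le>Suc m. f a' 0 1 * f (Suc m - a') 1 m)
      = (\<Sum>a'\<le>Suc m. if a' = 1 then f 1 0 1 * f m 1 m else 0)"
  proof (rule sum.cong)
    fix a' assume a': "a' \<in> {..Suc m}"
    consider "a' = 0" | "a' = 1" | "a' = 2" | "a' \<ge> 3" by linarith
    then show "f a' 0 1 * f (Suc m - a') 1 m = (if a' = 1 then f 1 0 1 * f m 1 m else 0)"
    proof cases
      case 1 then show ?thesis using f001[OF cm n] by simp
    next
      case 2 then show ?thesis by simp
    next
      case 3
      then obtain k where "m = Suc k" using a' by (cases m) auto
      then show ?thesis using 3 G[OF cm n, of k] b Suc.prems by simp
    next
      case 4 then show ?thesis using deg[OF cm n, of m "Suc m - a'" 1] Suc.prems n a' by simp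
    qed
  qed simp
  also have "\<dots> = f 1 0 1 * f m 1 m" by simp
  also have "(\<Sum>a'\<le>Suc m. f a' 1 1 * f (Suc m - a') 0 m)
      = (\<Sum>a'\<le>Suc m. if a' = 1 then f 1 1 1 * f 1 0 1 ^ m else 0)"
  proof (rule sum.cong)
    fix a' assume a': "a' \<in> {..Suc m}"
    consider "a' = 0" | "a' = 1" | "a' \<ge> 2" by linarith
    then show "f a' 1 1 * f (Suc m - a') 0 m = (if a' = 1 then f 1 1 1 * f 1 0 1 ^ m else 0)"
    proof cases
      case 1 then show ?thesis using b by simp
    next
      case 2 then show ?thesis using diag[OF cm n, of m] Suc.prems by simp
    next
      case 3 then show ?thesis using deg[OF cm n, of m "Suc m - a'" 0] Suc.prems n a' by simp
    qed
  qed simp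
  also have "\<dots> = f 1 1 1 * f 1 0 1 ^ m" by simp
  finally show ?case using Suc by (cases m) (simp_all add: algebra_simps)
qed

theorem proposition1p15:
  fixes n :: nat
    and P D :: "nat \<Rightarrow> nat \<Rightarrow> nat \<Rightarrow> 'a :: {alg_closed_field, field_char_0}"
  assumes "n \<ge> 2"
    and "regular_q_magma_coalg n P D"
  shows "\<forall>i. 1 \<le> i \<and> i \<le> n - 1 \<longrightarrow>
           P i 1 i = of_nat i * P 1 1 1 * (P 1 0 1) ^ (i - 1) \<and>
           D i 1 i = of_nat i * D 1 1 1 * (D 1 0 1) ^ (i - 1)"
proof -
  note n = assms(1)
  obtain U L where cP: "coalg_morph n P" and cD: "coalg_morph n D"
    and cU: "coalg_morph n U" and cL: "coalg_morph n L"
    and inv: "\<forall>i<n. \<forall>j<n. \<forall>m<n.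
          (\<Sum>u\<le>j. \<Sum>k<n. U i u k * P k (j - u) m) = (if j = 0 \<and> m = i then 1 else 0) \<and>
          (\<Sum>u\<le>j. \<Sum>k<n. D i (j - u) k * L k u m) = (if j = 0 \<and> m = i then 1 else 0)"
    using assms(2) unfolding regular_q_magma_coalg_def by blast
  have n1: "1 < n" using n by simp
  have "(\<Sum>k<n. U 1 0 k * P k 0 1) = 1" using inv[rule_format, of 1 0 1] n1 by simp
  also have "(\<Sum>k<n. U 1 0 k * P k 0 1) = (\<Sum>k<n. if k = 1 then U 1 0 1 * P 1 0 1 else 0)"
  proof (rule sum.cong)
    fix k assume k: "k \<in> {..<n}"
    consider "k = 0" | "k = 1" | "k \<ge> 2" by linarith
    then show "U 1 0 k * P k 0 1 = (if k = 1 then U 1 0 1 * P 1 0 1 else 0)"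
    proof cases
      case 1 then show ?thesis using cm0[OF cU, of 1 0] n1 by simp
    next
      case 2 then show ?thesis by simp
    next
      case 3 then show ?thesis using deg[OF cU n, of k 1 0] k by simp
    qed
  qed simp
  finally have aP: "P 1 0 1 \<noteq> 0" using n1 by auto
  have "(\<Sum>k<n. D 1 0 k * L k 0 1) = 1" using inv[rule_format, of 1 0 1] n1 by simp
  also have "(\<Sum>k<n. D 1 0 k * L k 0 1) = (\<Sum>k<n. if k = 1 then D 1 0 1 * L 1 0 1 else 0)"
  proof (rule sum.cong)
    fix k assume k: "k \<in> {..<n}"
    consider "k = 0" | "k = 1" | "k \<ge> 2" by linarith
    then show "D 1 0 k * L k 0 1 = (if k = 1 then D 1 0 1 * L 1 0 1 else 0)"
    proof cases
      case 1 then show ?thesis using cm0[OF cD, of 1 0] n1 by simp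
    next
      case 2 then show ?thesis by simp
    next
      case 3 then show ?thesis using deg[OF cD n, of k 1 0] k by simp
    qed
  qed simp
  finally have aD: "D 1 0 1 \<noteq> 0" using n1 by auto
  show ?thesis
  proof (intro allI impI)
    fix i assume i: "1 \<le> i \<and> i \<le> n - 1"
    then have "i < n" using n by linarith
    then show "P i 1 i = of_nat i * P 1 1 1 * (P 1 0 1) ^ (i - 1) \<and>
           D i 1 i = of_nat i * D 1 1 1 * (D 1 0 1) ^ (i - 1)"
      using H[OF cP n aP] H[OF cD n aD] by blast
  qed
qed

end
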